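(* Let $\mathcal{Z}$ be a measurable data space, $m\geq 1$ an integer, $\mathcal{H}$ a measurable predictor space, and $\ell:\mathcal{H}\times\mathcal{Z}\to[0,K]$ a measurable loss function bounded by a constant $K>0$. Let $\mu$ be any probability distribution on $\mathcal{Z}^m$ and let $S=(z_1,\dots,z_m)\sim\mu$. Let $(\mathcal{F}_i)_{i\geq 0}$ be a filtration adapted to $S$. Let $\lambda>0$ and $\delta\in(0,1)$. Let $(P_i)_{i=1}^m$ be any online predictive sequence of stochastic kernels, and let $(Q_i)_{i=1}^m$ be any sequence of stochastic kernels from $\mathcal{Z}^m$ to $\mathcal{H}$. Writing $Q_{i,S}:=Q_i(S,\cdot)$ and $P_{i,S}:=P_i(S,\cdot)$, with probability at least $1-\delta$ over $S\sim\mu$, \[ \sum_{i=1}^m \mathbb{E}_{h_i\sim Q_{i,S}}\Big[\mathbb{E}[\ell(h_i,z_i)\mid\mathcal{F}_{i-1}]\Big]\leq \sum_{i=1}^m\Big(\mathbb{E}_{h_i\sim Q_{i,S}}[\ell(h_i,z_i)]+\frac{\operatorname{KL}(Q_{i,S}\|P_{i,S})}{\lambda}\Big)+\frac{\lambda m K^2}{2}+\frac{\log(1/\delta)}{\lambda}. \] Here $\mathbb{E}[\ell(h,z_i)\mid\mathcal{F}_{i-1}]$ denotes the conditional expectation for a fixed $h$, then evaluated at $h=h_i$.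
   Context: A stochastic kernel from $\mathcal{Z}^m$ to $\mathcal{H}$ (with $\sigma$-algebra $\Sigma_{\mathcal{H}}$) is a map $Q:\mathcal{Z}^m\times\Sigma_{\mathcal{H}}\to[0,1]$ such that for every $B\in\Sigma_{\mathcal{H}}$, $S\mapsto Q(S,B)$ is measurable, and for every $S$, $B\mapsto Q(S,B)$ is a probability measure on $\mathcal{H}$. A sequence of stochastic kernels $(P_i)_{i=1}^m$ is an online predictive sequence if (i) for all $i\geq1$ and all $S$, $P_i(S,\cdot)$ is $\mathcal{F}_{i-1}$-measurable (it depends on the data only through $\mathcal{F}_{i-1}$; in particular $P_1(S,\cdot)$ is a data-free probability measure), and (ii) for all $i\geq 2$, $P_i(S,\cdot)$ is absolutely continuous with respect to $P_{i-1}(S,\cdot)$. $\operatorname{KL}$ denotes the Kullback–Leibler divergence (equal to $+\infty$ when the first measure is not absolutely continuous w.r.t. the second). No assumption (such as independence) is made on $\mu$. *)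

theory Defs
  imports "HOL-Probability.Probability"
begin

text \<open>Kullback-Leibler divergence KL(Q || P) with values in the extended reals:
  the usual integral of the log Radon-Nikodym derivative dQ/dP with respect to Q
  (the library notion KL_divergence with natural log) when Q is absolutely continuous
  with respect to P and the log-density is Q-integrable; +infinity otherwise.
  (The negative part of the integrand always has Q-integral at most 1/e, so
  non-integrability means the integral is +infinity.)\<close>
definition KL_div :: "'a measure \<Rightarrow> 'a measure \<Rightarrow> ereal" where
  "KL_div Q P =
     (if absolutely_continuous P Q \<and> integrable Q (entropy_density (exp 1) P Q)
      then ereal (KL_divergence (exp 1) P Q) else \<infinity>)"

definition is_rcd :: "'a measure \<Rightarrow> 'a measure \<Rightarrow> ('a \<Rightarrow> 'b) \<Rightarrow> 'b measure \<Rightarrow> ('a \<Rightarrow> 'b measure) \<Rightarrow> bool" where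
  "is_rcd M F X MX \<kappa> \<longleftrightarrow>
     \<kappa> \<in> measurable F (prob_algebra MX) \<and>
     (\<forall>A\<in>sets MX. AE x in M. measure (\<kappa> x) A
          = real_cond_exp M F (indicator {y \<in> space M. X y \<in> A}) x)"

end

theory Submission
  imports Defs
begin

lemma disint:
  assumes P: "prob_space M" and sub: "subalgebra M F"
  and X[measurable]: "X \<in> measurable M N"
  and k: "\<kappa> \<in> measurable F (prob_algebra N)"
  and rcd: "\<forall>A\<in>sets N. AE x in M. measure (\<kappa> x) A = real_cond_exp M F (indicator {y\<in>space M. X y \<in> A}) x"
  and f: "f \<in> borel_measurable (F \<Otimes>\<^sub>M N)"
  shows "(\<integral>\<^sup>+x. f (x, X x) \<partial>M) = (\<integral>\<^sup>+x. \<integral>\<^sup>+y. f (x,y) \<partial>\<kappa> x \<partial>M)"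
proof -
  interpret prob_space M by fact
  interpret S: finite_measure_subalgebra M F
    using sub by unfold_locales
  have sF: "sets F \<subseteq> sets M" and spF: "space F = space M" using sub by (auto simp: subalgebra_def)
  have idm[measurable]: "(\<lambda>x. x) \<in> measurable M F"
    using sF spF by (auto simp: measurable_def)
  have kM: "\<kappa> \<in> measurable M (prob_algebra N)"
    by (rule measurable_from_subalg[OF sub k])
  have T[measurable]: "(\<lambda>x. (x, X x)) \<in> measurable M (F \<Otimes>\<^sub>M N)"
    by measurable
  define \<nu>1 where "\<nu>1 = distr M (F \<Otimes>\<^sub>M N) (\<lambda>x. (x, X x))"
  define Kn where "Kn = (\<lambda>x. distr (\<kappa> x) (F \<Otimes>\<^sub>M N) (Pair x))"
  have pm: "(\<lambda>(x, y). (x, y)) \<in> M \<Otimes>\<^sub>M N \<rightarrow>\<^sub>M F \<Otimes>\<^sub>M N"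
    by measurable
  have Kn: "Kn \<in> measurable M (prob_algebra (F \<Otimes>\<^sub>M N))"
    unfolding Kn_def using measurable_distr_prob_space2[OF kM pm] by simp
  define \<nu>2 where "\<nu>2 = M \<bind> Kn"
  have Msp: "M \<in> space (prob_algebra M)"
    by (simp add: space_prob_algebra prob_space_axioms)
  have s1: "sets \<nu>1 = sets (F \<Otimes>\<^sub>M N)" by (simp add: \<nu>1_def)
  have s2: "sets \<nu>2 = sets (F \<Otimes>\<^sub>M N)" unfolding \<nu>2_def by (rule sets_bind'[OF Msp Kn])
  have kx: "x \<in> space M \<Longrightarrow> prob_space (\<kappa> x) \<and> sets (\<kappa> x) = sets N" for x
    using measurable_space[OF kM] by (auto simp: space_prob_algebra)
  have eq: "\<nu>1 = \<nu>2"
  proof (rule measure_eqI_generator_eq[OF Int_stable_pair_measure_generator[of F N]])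
    show "{a \<times> b |a b. a \<in> sets F \<and> b \<in> sets N} \<subseteq> Pow (space F \<times> space N)"
      by (auto dest: sets.sets_into_space)
    show "sets \<nu>1 = sigma_sets (space F \<times> space N) {a \<times> b |a b. a \<in> sets F \<and> b \<in> sets N}"
      using s1 sets_pair_measure by metis
    show "sets \<nu>2 = sigma_sets (space F \<times> space N) {a \<times> b |a b. a \<in> sets F \<and> b \<in> sets N}"
      using s2 sets_pair_measure by metis
    show "range (\<lambda>_. space F \<times> space N) \<subseteq> {a \<times> b |a b. a \<in> sets F \<and> b \<in> sets N}" by auto
    show "(\<Union>i. space F \<times> space N) = space F \<times> space N" by simp
    show "emeasure \<nu>1 (space F \<times> space N) \<noteq> \<infinity>"
      unfolding \<nu>1_def using sets.top[of "F \<Otimes>\<^sub>M N"] by (subst emeasure_distr) (auto simp: emeasure_eq_measure)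
    fix Y assume "Y \<in> {a \<times> b |a b. a \<in> sets F \<and> b \<in> sets N}"
    then obtain B C where Y: "Y = B \<times> C" and B: "B \<in> sets F" and C: "C \<in> sets N" by auto
    have BM: "B \<in> sets M" using B sF by auto
    have YS: "Y \<in> sets (F \<Otimes>\<^sub>M N)" using Y B C by auto
    have "emeasure \<nu>1 Y = emeasure M {x \<in> space M. x \<in> B \<and> X x \<in> C}"
      unfolding \<nu>1_def using YS by (subst emeasure_distr) (auto simp: Y intro!: arg_cong[where f="emeasure M"])
    also have "\<dots> = ennreal (\<integral>x. indicator B x * indicator {y\<in>space M. X y \<in> C} x \<partial>M)"
    proof -
      have "{x \<in> space M. x \<in> B \<and> X x \<in> C} \<in> sets M" using BM C by measurable
      moreover have "(\<lambda>x. indicator B x * indicator {y\<in>space M. X y \<in> C} x :: real) = indicator {x \<in> space M. x \<in> B \<and> X x \<in> C}"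
        by (auto simp: indicator_def fun_eq_iff)
      ultimately show ?thesis by (simp add: emeasure_eq_measure)
    qed
    also have "\<dots> = ennreal (\<integral>x. indicator B x * real_cond_exp M F (indicator {y\<in>space M. X y \<in> C}) x \<partial>M)"
    proof -
      have [measurable]: "{y\<in>space M. X y \<in> C} \<in> sets M" using C by measurable
      have "(\<integral> x. indicator B x * real_cond_exp M F (indicator {y\<in>space M. X y \<in> C}) x \<partial>M) = (\<integral> x. indicator B x * indicator {y\<in>space M. X y \<in> C} x \<partial>M)"
        by (rule S.real_cond_exp_intg(2)) (use B BM in \<open>auto intro!: integrable_real_mult_indicator simp: emeasure_eq_measure\<close>)
      then show ?thesis by simp
    qed
    also have "\<dots> = ennreal (\<integral>x. indicator B x * measure (\<kappa> x) C \<partial>M)"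
    proof -
      have [measurable]: "(\<lambda>x. measure (\<kappa> x) C) \<in> borel_measurable M"
        using kM C by measurable
      show ?thesis
      using rcd C BM by (intro arg_cong[where f=ennreal] integral_cong_AE) (auto elim!: eventually_mono intro!: borel_measurable_cond_exp2)
    qed
    also have "\<dots> = (\<integral>\<^sup>+x. ennreal (indicator B x * measure (\<kappa> x) C) \<partial>M)"
    proof (rule nn_integral_eq_integral[symmetric])
      have [measurable]: "(\<lambda>x. measure (\<kappa> x) C) \<in> borel_measurable M"
        using kM C by measurable
      show "integrable M (\<lambda>x. indicator B x * measure (\<kappa> x) C)"
        by (rule integrable_const_bound[where B=1]) (use BM kx in \<open>auto simp: indicator_def intro!: AE_I2 prob_space.prob_le_1\<close>)
    qed auto
    also have "\<dots> = (\<integral>\<^sup>+x. emeasure (Kn x) Y \<partial>M)"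
    proof (rule nn_integral_cong)
      fix x assume x: "x \<in> space M"
      then have "emeasure (Kn x) Y = emeasure (\<kappa> x) (Pair x -` Y \<inter> space (\<kappa> x))"
        unfolding Kn_def using YS kx[OF x] spF
        by (subst emeasure_distr) (auto simp: measurable_Pair2' cong: measurable_cong_sets)
      also have "\<dots> = indicator B x * emeasure (\<kappa> x) C"
        using kx[OF x] C by (auto simp: Y indicator_def dest: sets_eq_imp_space_eq sets.sets_into_space intro!: arg_cong[where f="emeasure (\<kappa> x)"])
      finally show "ennreal (indicator B x * measure (\<kappa> x) C) = emeasure (Kn x) Y"
        using kx[OF x] by (simp add: finite_measure.emeasure_eq_measure prob_space_def indicator_def)
    qed
    also have "\<dots> = emeasure \<nu>2 Y"
      unfolding \<nu>2_def by (rule emeasure_bind_prob_algebra[OF Msp Kn YS, symmetric])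
    finally show "emeasure \<nu>1 Y = emeasure \<nu>2 Y" .
  qed
  have "(\<integral>\<^sup>+x. f (x, X x) \<partial>M) = (\<integral>\<^sup>+z. f z \<partial>\<nu>1)"
    unfolding \<nu>1_def using f by (subst nn_integral_distr) auto
  also have "\<dots> = (\<integral>\<^sup>+z. f z \<partial>\<nu>2)" by (simp add: eq)
  also have "\<dots> = (\<integral>\<^sup>+x. \<integral>\<^sup>+z. f z \<partial>Kn x \<partial>M)"
    unfolding \<nu>2_def by (rule nn_integral_bind[OF f measurable_prob_algebraD[OF Kn]])
  also have "\<dots> = (\<integral>\<^sup>+x. \<integral>\<^sup>+y. f (x,y) \<partial>\<kappa> x \<partial>M)"
  proof (rule nn_integral_cong)
    fix x assume x: "x \<in> space M"
    show "(\<integral>\<^sup>+z. f z \<partial>Kn x) = (\<integral>\<^sup>+y. f (x,y) \<partial>\<kappa> x)"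
      unfolding Kn_def using x kx[OF x] spF f
      by (subst nn_integral_distr) (auto simp: measurable_Pair2' cong: measurable_cong_sets)
  qed
  finally show ?thesis .
qed

lemma DV:
  fixes f :: "'a \<Rightarrow> real"
  assumes Q: "prob_space Q" and P: "prob_space P" and sQ: "sets Q = sets P"
  and f[measurable]: "f \<in> borel_measurable P" and fb: "\<And>x. x \<in> space P \<Longrightarrow> \<bar>f x\<bar> \<le> B"
  shows "ereal (\<integral>x. f x \<partial>Q) \<le> KL_div Q P + ereal (ln (\<integral>x. exp (f x) \<partial>P))"
proof (cases "absolutely_continuous P Q \<and> integrable Q (entropy_density (exp 1) P Q)")
  case False then have "KL_div Q P = \<infinity>" unfolding KL_div_def by auto
  then show ?thesis by simp
next
  case True
  interpret P: prob_space P by fact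
  interpret Q: prob_space Q by fact
  have ac: "absolutely_continuous P Q" and int: "integrable Q (entropy_density (exp 1) P Q)"
    using True by auto
  define r where "r x = enn2real (RN_deriv P Q x)" for x
  have ed: "entropy_density (exp 1) P Q = (\<lambda>x. ln (r x))"
    by (auto simp: entropy_density_def r_def log_def fun_eq_iff)
  have KL: "KL_div Q P = ereal (\<integral>x. ln (r x) \<partial>Q)"
    using True by (simp add: KL_div_def KL_divergence_def ed)
  have spQ: "space Q = space P" using sQ by (rule sets_eq_imp_space_eq)
  have fQ[measurable]: "f \<in> borel_measurable Q" using sQ f by (simp cong: measurable_cong_sets)
  have rP[measurable]: "r \<in> borel_measurable P" unfolding r_def by measurable
  have rQ[measurable]: "r \<in> borel_measurable Q" using sQ rP by (simp cong: measurable_cong_sets)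
  define Z where "Z = (\<integral>x. exp (f x) \<partial>P)"
  have intP: "integrable P (\<lambda>x. exp (f x))"
    by (rule P.integrable_const_bound[where B="exp B"]) (use fb in \<open>auto intro!: AE_I2 simp: abs_le_iff\<close>)
  have "(\<integral>x. exp (-B) \<partial>P) \<le> Z"
    unfolding Z_def proof (rule integral_mono[OF _ intP])
    show "integrable P (\<lambda>x. exp (- B))" by simp
    fix x assume "x \<in> space P"
    then have "- B \<le> f x" using fb[of x] by linarith
    then show "exp (- B) \<le> exp (f x)" by simp
  qed
  then have "exp (-B) \<le> Z" by (simp add: P.prob_space)
  then have Zpos: "Z > 0" using exp_gt_zero[of "-B"] by linarith
  have dens: "density P (RN_deriv P Q) = Q" using P.density_RN_deriv[OF ac sQ] .
  have AEpos: "AE x in Q. r x > 0"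
  proof -
    have "AE x in P. RN_deriv P Q x \<noteq> \<infinity>"
      by (rule P.RN_deriv_finite[OF _ ac sQ]) (rule Q.sigma_finite_measure_axioms)
    then have "AE x in density P (RN_deriv P Q). 0 < r x"
      by (subst AE_density) (auto elim!: eventually_mono simp: r_def enn2real_positive_iff top.not_eq_extremum)
    then show ?thesis by (simp only: dens)
  qed
  define g where "g x = exp (f x) / r x" for x
  have gP[measurable]: "g \<in> borel_measurable P" unfolding g_def by measurable
  have gQ[measurable]: "g \<in> borel_measurable Q" using sQ gP by (simp cong: measurable_cong_sets)
  have gnn: "(\<integral>\<^sup>+x. ennreal (g x) \<partial>Q) \<le> ennreal Z"
  proof -
    have "(\<integral>\<^sup>+x. ennreal (g x) \<partial>Q) = (\<integral>\<^sup>+x. RN_deriv P Q x * ennreal (g x) \<partial>P)"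
      by (rule P.RN_deriv_nn_integral[OF ac sQ]) measurable
    also have "\<dots> \<le> (\<integral>\<^sup>+x. ennreal (exp (f x)) \<partial>P)"
    proof (intro nn_integral_mono)
      fix x
      show "RN_deriv P Q x * ennreal (g x) \<le> ennreal (exp (f x))"
      proof (cases "RN_deriv P Q x = \<infinity>")
        case True then show ?thesis by (simp add: g_def r_def)
      next
        case False
        then obtain t where t: "RN_deriv P Q x = ennreal t" "t \<ge> 0"
          by (metis ennreal_cases infinity_ennreal_def)
        show ?thesis
        proof (cases "t = 0")
          case True then show ?thesis using t by simp
        next
          case False
          then have "r x = t" using t by (simp add: r_def)
          then show ?thesis using t False by (simp add: g_def ennreal_mult'[symmetric])
        qed
      qed
    qed
    also have "\<dots> = ennreal Z" using nn_integral_eq_integral[OF intP] by (simp add: Z_def)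
    finally show ?thesis .
  qed
  have g0: "AE x in Q. 0 \<le> g x"
    using AEpos by (auto elim!: eventually_mono simp: g_def)
  have gint: "integrable Q g"
    by (rule integrableI_nonneg[OF gQ g0]) (use gnn in \<open>auto simp: top.not_eq_extremum intro: le_less_trans\<close>)
  have gZ: "(\<integral>x. g x \<partial>Q) \<le> Z"
  proof -
    have "(\<integral>x. g x \<partial>Q) = enn2real (\<integral>\<^sup>+x. ennreal (g x) \<partial>Q)"
      by (rule integral_eq_nn_integral[OF gQ g0])
    also have "\<dots> \<le> enn2real (ennreal Z)"
      by (rule enn2real_mono[OF gnn]) simp
    finally show ?thesis using Zpos by simp
  qed
  have fint: "integrable Q f"
    by (rule Q.integrable_const_bound[where B=B]) (use fb spQ in \<open>auto intro!: AE_I2\<close>)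
  have lint: "integrable Q (\<lambda>x. ln (r x))" using int ed by simp
  have main: "(\<integral>x. f x - ln (r x) - ln Z \<partial>Q) \<le> (\<integral>x. g x / Z - 1 \<partial>Q)"
  proof (rule integral_mono_AE)
    show "integrable Q (\<lambda>x. f x - ln (r x) - ln Z)" using fint lint by auto
    show "integrable Q (\<lambda>x. g x / Z - 1)" using gint by auto
    show "AE x in Q. f x - ln (r x) - ln Z \<le> g x / Z - 1"
      using AEpos
    proof (elim eventually_mono)
      fix x assume rx: "0 < r x"
      have "ln (exp (f x) / (r x * Z)) \<le> exp (f x) / (r x * Z) - 1"
        by (rule ln_le_minus_one) (use rx Zpos in simp)
      moreover have "ln (exp (f x) / (r x * Z)) = f x - ln (r x) - ln Z"
        using rx Zpos by (simp add: ln_div ln_mult)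
      ultimately show "f x - ln (r x) - ln Z \<le> g x / Z - 1"
        by (simp add: g_def)
    qed
  qed
  have "(\<integral>x. f x - ln (r x) - ln Z \<partial>Q) = (\<integral>x. f x \<partial>Q) - (\<integral>x. ln (r x) \<partial>Q) - ln Z"
    using fint lint by (simp add: Q.prob_space)
  moreover have "(\<integral>x. g x / Z - 1 \<partial>Q) = (\<integral>x. g x \<partial>Q) / Z - 1"
    using gint by (simp add: Q.prob_space)
  moreover have "(\<integral>x. g x \<partial>Q) / Z - 1 \<le> 0" using gZ Zpos by simp
  ultimately have "(\<integral>x. f x \<partial>Q) \<le> (\<integral>x. ln (r x) \<partial>Q) + ln Z" using main by linarith
  then show ?thesis unfolding KL Z_def by simp
qed

lemma int_meas2:
  fixes f :: "_ \<Rightarrow> _ \<Rightarrow> real"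
  assumes f[measurable]: "(\<lambda>(x, y). f x y) \<in> borel_measurable (M \<Otimes>\<^sub>M N)"
  assumes L[measurable]: "L \<in> measurable M (subprob_algebra N)"
  shows "(\<lambda>x. integral\<^sup>L (L x) (f x)) \<in> borel_measurable M"
proof -
  note integral_measurable_subprob_algebra[measurable] measurable_distr2[measurable]
  have "(\<lambda>x. integral\<^sup>L (distr (L x) (M \<Otimes>\<^sub>M N) (\<lambda>y. (x, y))) (\<lambda>(x, y). f x y)) \<in> borel_measurable M"
    by measurable
  then show ?thesis
  proof (rule measurable_cong[THEN iffD1, rotated])
    fix x assume x: "x \<in> space M"
    have Lx: "sets (L x) = sets N" using measurable_space[OF L x] by (simp add: space_subprob_algebra)
    have Px: "(\<lambda>y. (x, y)) \<in> measurable (L x) (M \<Otimes>\<^sub>M N)"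
      using x Lx by (simp add: measurable_Pair2' cong: measurable_cong_sets)
    show "integral\<^sup>L (distr (L x) (M \<Otimes>\<^sub>M N) (\<lambda>y. (x, y))) (\<lambda>(x, y). f x y) = integral\<^sup>L (L x) (f x)"
      using integral_distr[OF Px f] by simp
  qed
qed

lemma step_bound:
  fixes loss :: "'h \<Rightarrow> 'z \<Rightarrow> real"
  assumes k: "prob_space \<kappa>" "sets \<kappa> = sets MZ" and Pm: "prob_space Pm" "sets Pm = sets MH"
    and lam: "lam > 0" and K: "K > 0"
    and loss_meas[measurable]: "(\<lambda>(h, z). loss h z) \<in> borel_measurable (MH \<Otimes>\<^sub>M MZ)"
    and loss_bdd: "\<And>h z. h \<in> space MH \<Longrightarrow> z \<in> space MZ \<Longrightarrow> 0 \<le> loss h z \<and> loss h z \<le> K"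
  shows "(\<integral>\<^sup>+z. \<integral>\<^sup>+h. ennreal (exp (lam * ((\<integral>z'. loss h z' \<partial>\<kappa>) - loss h z) - lam\<^sup>2 * K\<^sup>2 / 2)) \<partial>Pm \<partial>\<kappa>) \<le> 1"
proof -
  interpret k: prob_space \<kappa> by fact
  interpret Pm: prob_space Pm by fact
  interpret pair_sigma_finite \<kappa> Pm by unfold_locales
  define c where "c = lam\<^sup>2 * K\<^sup>2 / 2"
  have kspace: "space \<kappa> = space MZ" using k(2) by (rule sets_eq_imp_space_eq)
  have Pspace: "space Pm = space MH" using Pm(2) by (rule sets_eq_imp_space_eq)
  have ksub: "\<kappa> \<in> space (subprob_algebra MZ)"
    using k(2) by (simp add: space_subprob_algebra k.subprob_space_axioms)
  have E[measurable]: "(\<lambda>h. \<integral>z'. loss h z' \<partial>\<kappa>) \<in> borel_measurable MH"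
    by (rule int_meas2[where N=MZ and L="\<lambda>_. \<kappa>"]) (use ksub in \<open>measurable\<close>)
  have meas: "(\<lambda>(z, h). ennreal (exp (lam * ((\<integral>z'. loss h z' \<partial>\<kappa>) - loss h z) - c))) \<in> borel_measurable (\<kappa> \<Otimes>\<^sub>M Pm)"
  proof -
    have "(\<lambda>(z, h). ennreal (exp (lam * ((\<integral>z'. loss h z' \<partial>\<kappa>) - loss h z) - c))) \<in> borel_measurable (MZ \<Otimes>\<^sub>M MH)"
      by measurable
    then show ?thesis using k(2) Pm(2)
      by (subst measurable_cong_sets[OF sets_pair_measure_cong[OF k(2) Pm(2)] refl])
  qed
  have "(\<integral>\<^sup>+z. \<integral>\<^sup>+h. ennreal (exp (lam * ((\<integral>z'. loss h z' \<partial>\<kappa>) - loss h z) - c)) \<partial>Pm \<partial>\<kappa>)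
      = (\<integral>\<^sup>+h. \<integral>\<^sup>+z. ennreal (exp (lam * ((\<integral>z'. loss h z' \<partial>\<kappa>) - loss h z) - c)) \<partial>\<kappa> \<partial>Pm)"
    using Fubini'[OF meas] by simp
  also have "\<dots> \<le> (\<integral>\<^sup>+h. 1 \<partial>Pm)"
  proof (rule nn_integral_mono)
    fix h assume h: "h \<in> space Pm"
    then have hM: "h \<in> space MH" using Pspace by simp
    have lm[measurable]: "(\<lambda>z. loss h z) \<in> borel_measurable MZ"
      using hM by measurable
    have lk[measurable]: "(\<lambda>z. - loss h z) \<in> borel_measurable \<kappa>"
      using lm k(2) by (simp cong: measurable_cong_sets)
    have ibv: "interval_bounded_random_variable \<kappa> (\<lambda>z. - loss h z) (-K) 0"
      unfolding interval_bounded_random_variable_def interval_bounded_random_variable_axioms_def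
    proof (intro conjI AE_I2)
      show "prob_space \<kappa>" by (rule k(1))
      show "(\<lambda>z. - loss h z) \<in> borel_measurable \<kappa>" by (rule lk)
      fix z assume "z \<in> space \<kappa>"
      then have "z \<in> space MZ" using kspace by simp
      then show "- loss h z \<in> {-K..0}" using loss_bdd[OF hM] by simp
    qed
    interpret ib: interval_bounded_random_variable \<kappa> "\<lambda>z. - loss h z" "-K" 0
      by (rule ibv)
    have H: "(\<integral>\<^sup>+z. ennreal (exp (lam * (- loss h z - k.expectation (\<lambda>z. - loss h z)))) \<partial>\<kappa>) \<le> ennreal (exp (lam\<^sup>2 * (0 - - K)\<^sup>2 / 8))"
      by (rule ib.Hoeffdings_lemma_nn_integral[OF lam])
    have "(\<integral>\<^sup>+z. ennreal (exp (lam * ((\<integral>z'. loss h z' \<partial>\<kappa>) - loss h z) - c)) \<partial>\<kappa>)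
        = (\<integral>\<^sup>+z. ennreal (exp (lam * (- loss h z - k.expectation (\<lambda>z. - loss h z)))) * ennreal (exp (- c)) \<partial>\<kappa>)"
      by (intro nn_integral_cong) (simp add: ennreal_mult[symmetric] exp_add[symmetric] algebra_simps)
    also have "\<dots> = (\<integral>\<^sup>+z. ennreal (exp (lam * (- loss h z - k.expectation (\<lambda>z. - loss h z)))) \<partial>\<kappa>) * ennreal (exp (- c))"
      by (rule nn_integral_multc) measurable
    also have "\<dots> \<le> ennreal (exp (lam\<^sup>2 * (0 - - K)\<^sup>2 / 8)) * ennreal (exp (- c))"
      by (rule mult_right_mono[OF H]) simp
    also have "\<dots> = ennreal (exp (lam\<^sup>2 * K\<^sup>2 / 8 - c))"
      by (simp add: ennreal_mult[symmetric] exp_add[symmetric])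
    also have "\<dots> \<le> 1"
    proof -
      have "lam\<^sup>2 * K\<^sup>2 / 8 - c \<le> 0" unfolding c_def by (simp add: field_simps)
      then show ?thesis by simp
    qed
    finally show "(\<integral>\<^sup>+z. ennreal (exp (lam * ((\<integral>z'. loss h z' \<partial>\<kappa>) - loss h z) - c)) \<partial>\<kappa>) \<le> 1" .
  qed
  also have "\<dots> = 1" by (simp add: Pm.emeasure_space_1)
  finally show ?thesis unfolding c_def .
qed

lemma ereal_step:
  fixes e l z lam :: real and KL :: ereal
  assumes lam: "lam > 0" and KLn: "KL \<noteq> -\<infinity>"
    and h: "ereal (lam * (e - l)) \<le> KL + ereal z"
  shows "ereal e \<le> ereal l + KL / ereal lam + ereal (z / lam)"
proof (cases KL)
  case (real k)
  then have "lam * (e - l) \<le> k + z" using h by simp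
  then have "e - l \<le> (k + z) / lam" using lam by (simp add: field_simps)
  then have "e \<le> l + k / lam + z / lam" by (simp add: add_divide_distrib)
  then show ?thesis using real lam by simp
next
  case PInf then show ?thesis using lam by simp
next
  case MInf then show ?thesis using KLn by simp
qed


lemma meas_mono_F:
  "sets A \<subseteq> sets B \<Longrightarrow> space A = space B \<Longrightarrow> f \<in> measurable A N \<Longrightarrow> f \<in> measurable B N"
  using measurable_mono[of N N A B] by auto

lemma meas_section:
  assumes "(\<lambda>(x,y). f x y) \<in> borel_measurable (M \<Otimes>\<^sub>M N)" "x \<in> space M" "sets L = sets N"
  shows "f x \<in> borel_measurable L"
proof -
  have "(\<lambda>y. (\<lambda>(x,y). f x y) (x, y)) \<in> borel_measurable N"
    by (rule measurable_Pair2[OF assms(1,2)])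
  then have "f x \<in> borel_measurable N" by simp
  then show ?thesis using assms(3) by (simp cong: measurable_cong_sets)
qed

lemma int_bdd:
  fixes f :: "'a \<Rightarrow> real"
  assumes "prob_space M" "f \<in> borel_measurable M" "\<And>x. x \<in> space M \<Longrightarrow> 0 \<le> f x \<and> f x \<le> K"
  shows "0 \<le> integral\<^sup>L M f \<and> integral\<^sup>L M f \<le> K \<and> integrable M f"
proof -
  interpret prob_space M by fact
  have i: "integrable M f"
    by (rule integrable_const_bound[where B=K]) (use assms in \<open>auto intro!: AE_I2\<close>)
  have "integral\<^sup>L M f \<le> integral\<^sup>L M (\<lambda>x. K)"
    by (rule integral_mono[OF i]) (use assms in auto)
  moreover have "0 \<le> integral\<^sup>L M f" by (rule integral_nonneg_AE) (use assms in \<open>auto intro!: AE_I2\<close>)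
  ultimately show ?thesis using i by (simp add: prob_space)
qed

lemma KL_div_not_MInf: "KL_div Q P \<noteq> -\<infinity>"
  by (simp add: KL_div_def)

theorem theorem2p3:
  fixes MZ :: "'z measure" and MH :: "'h measure" and m :: nat
    and loss :: "'h \<Rightarrow> 'z \<Rightarrow> real" and K :: real
    and \<mu> :: "(nat \<Rightarrow> 'z) measure"
    and F :: "nat \<Rightarrow> (nat \<Rightarrow> 'z) measure"
    and \<kappa> :: "nat \<Rightarrow> (nat \<Rightarrow> 'z) \<Rightarrow> 'z measure"
    and lam \<delta> :: real
    and P Q :: "nat \<Rightarrow> (nat \<Rightarrow> 'z) \<Rightarrow> 'h measure"
  assumes m: "m \<ge> 1"
    and loss_meas: "(\<lambda>(h, z). loss h z) \<in> borel_measurable (MH \<Otimes>\<^sub>M MZ)"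
    and K: "K > 0"
    and loss_bdd: "\<And>h z. h \<in> space MH \<Longrightarrow> z \<in> space MZ \<Longrightarrow> 0 \<le> loss h z \<and> loss h z \<le> K"
    and mu_prob: "prob_space \<mu>"
    and mu_sets: "sets \<mu> = sets (\<Pi>\<^sub>M i\<in>{1..m}. MZ)"
    and filt_sub: "\<And>i. i \<le> m \<Longrightarrow> subalgebra \<mu> (F i)"
    and filt_mono: "\<And>i j. i \<le> j \<Longrightarrow> j \<le> m \<Longrightarrow> sets (F i) \<subseteq> sets (F j)"
    and adapted: "\<And>i. 1 \<le> i \<Longrightarrow> i \<le> m \<Longrightarrow> (\<lambda>S. S i) \<in> measurable (F i) MZ"
    and rcd: "\<And>i. 1 \<le> i \<Longrightarrow> i \<le> m \<Longrightarrow> is_rcd \<mu> (F (i - 1)) (\<lambda>S. S i) MZ (\<kappa> i)"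
    and lam: "lam > 0"
    and delta: "0 < \<delta>" "\<delta> < 1"
    and Q_kernel: "\<And>i. 1 \<le> i \<Longrightarrow> i \<le> m \<Longrightarrow> Q i \<in> measurable (\<Pi>\<^sub>M i\<in>{1..m}. MZ) (prob_algebra MH)"
    and P_kernel: "\<And>i. 1 \<le> i \<Longrightarrow> i \<le> m \<Longrightarrow> P i \<in> measurable (\<Pi>\<^sub>M i\<in>{1..m}. MZ) (prob_algebra MH)"
    and P_pred: "\<And>i. 1 \<le> i \<Longrightarrow> i \<le> m \<Longrightarrow> P i \<in> measurable (F (i - 1)) (prob_algebra MH)"
    and P_1_data_free: "\<And>S S'. S \<in> space \<mu> \<Longrightarrow> S' \<in> space \<mu> \<Longrightarrow> P 1 S = P 1 S'"
    and P_ac: "\<And>i S. 2 \<le> i \<Longrightarrow> i \<le> m \<Longrightarrow> S \<in> space \<mu> \<Longrightarrow>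
                 absolutely_continuous (P (i - 1) S) (P i S)"
  shows "\<exists>A \<in> sets \<mu>. measure \<mu> A \<ge> 1 - \<delta> \<and>
     (\<forall>S \<in> A.
        ereal (\<Sum>i = 1..m. \<integral>h. (\<integral>z. loss h z \<partial>(\<kappa> i S)) \<partial>(Q i S))
        \<le> (\<Sum>i = 1..m. ereal (\<integral>h. loss h (S i) \<partial>(Q i S)) + KL_div (Q i S) (P i S) / ereal lam)
           + ereal (lam * real m * K\<^sup>2 / 2) + ereal (ln (1 / \<delta>) / lam))"
proof -
  interpret mu: prob_space \<mu> by (rule mu_prob)
  define \<Omega> where "\<Omega> = (\<Pi>\<^sub>M i\<in>{1..m}. MZ)"
  have spmu: "space \<mu> = space \<Omega>" using mu_sets unfolding \<Omega>_def by (rule sets_eq_imp_space_eq)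
  define c where "c = lam\<^sup>2 * K\<^sup>2 / 2"
  define E where "E i S h = (\<integral>z. loss h z \<partial>\<kappa> i S)" for i S h
  define G where "G i S z = (\<integral>\<^sup>+h. ennreal (exp (lam * (E i S h - loss h z) - c)) \<partial>P i S)" for i S z
  define g where "g i S = G i S (S i)" for i S
  have subF: "sets (F i) \<subseteq> sets \<mu>" "space (F i) = space \<mu>" if "i \<le> m" for i
    using filt_sub[OF that] by (auto simp: subalgebra_def)
  have kF: "\<kappa> i \<in> measurable (F (i-1)) (prob_algebra MZ)" if "1 \<le> i" "i \<le> m" for i
    using rcd[OF that] by (simp add: is_rcd_def)
  note [measurable] = loss_meas
  have Emeas: "(\<lambda>(S, h). E i S h) \<in> borel_measurable (F (i-1) \<Otimes>\<^sub>M MH)" if i: "1 \<le> i" "i \<le> m" for i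
  proof -
    have k1: "(\<lambda>x. \<kappa> i (fst x)) \<in> measurable (F (i-1) \<Otimes>\<^sub>M MH) (subprob_algebra MZ)"
      by (rule measurable_compose[OF measurable_fst measurable_prob_algebraD[OF kF[OF i]]])
    have "(\<lambda>x. integral\<^sup>L (\<kappa> i (fst x)) (\<lambda>z. loss (snd x) z)) \<in> borel_measurable (F (i-1) \<Otimes>\<^sub>M MH)"
      by (rule int_meas2[OF _ k1]) measurable
    then show ?thesis unfolding E_def by (simp add: case_prod_beta')
  qed
  have Gmeas: "(\<lambda>(S, z). G i S z) \<in> borel_measurable (F (i-1) \<Otimes>\<^sub>M MZ)" if i: "1 \<le> i" "i \<le> m" for i
  proof -
    note Emeas[OF i, measurable]
    have p1: "(\<lambda>x. P i (fst x)) \<in> measurable (F (i-1) \<Otimes>\<^sub>M MZ) (subprob_algebra MH)"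
      by (rule measurable_compose[OF measurable_fst measurable_prob_algebraD[OF P_pred[OF i]]])
    have "(\<lambda>x. integral\<^sup>N (P i (fst x)) (\<lambda>h. ennreal (exp (lam * (E i (fst x) h - loss h (snd x)) - c)))) \<in> borel_measurable (F (i-1) \<Otimes>\<^sub>M MZ)"
      by (rule nn_integral_measurable_subprob_algebra2[OF _ p1]) measurable
    then show ?thesis unfolding G_def by (simp add: case_prod_beta')
  qed
  have gmeas: "g i \<in> borel_measurable (F i)" if i: "1 \<le> i" "i \<le> m" for i
  proof -
    have idF: "(\<lambda>x. x) \<in> measurable (F i) (F (i-1))"
      by (rule meas_mono_F[OF _ _ measurable_ident_sets[OF refl]]) (use filt_mono[of "i-1" i] i subF in auto)
    have "(\<lambda>S. (S, S i)) \<in> measurable (F i) (F (i-1) \<Otimes>\<^sub>M MZ)"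
      by (rule measurable_Pair[OF idF adapted[OF i]])
    from measurable_compose[OF this Gmeas[OF i]] show ?thesis
      unfolding g_def by simp
  qed
  have gmu: "g i \<in> borel_measurable \<mu>" if i: "1 \<le> i" "i \<le> m" for i
    by (rule measurable_from_subalg[OF filt_sub gmeas[OF i]]) (use i in simp)
  have kS: "prob_space (\<kappa> i S) \<and> sets (\<kappa> i S) = sets MZ" if i: "1 \<le> i" "i \<le> m" and S: "S \<in> space \<mu>" for i S
    using measurable_space[OF kF[OF i], of S] S subF[of "i-1"] i by (auto simp: space_prob_algebra)
  have PS: "prob_space (P i S) \<and> sets (P i S) = sets MH" if i: "1 \<le> i" "i \<le> m" and S: "S \<in> space \<mu>" for i S
    using measurable_space[OF P_pred[OF i], of S] S subF[of "i-1"] i by (auto simp: space_prob_algebra)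
  have QS: "prob_space (Q i S) \<and> sets (Q i S) = sets MH" if i: "1 \<le> i" "i \<le> m" and S: "S \<in> space \<mu>" for i S
    using measurable_space[OF Q_kernel[OF i], of S] S spmu by (auto simp: space_prob_algebra \<Omega>_def)
  have Gle1: "(\<integral>\<^sup>+z. G i S z \<partial>\<kappa> i S) \<le> 1" if i: "1 \<le> i" "i \<le> m" and S: "S \<in> space \<mu>" for i S
    unfolding G_def E_def c_def
    by (rule step_bound[where MZ=MZ and MH=MH]) (use kS[OF i S] PS[OF i S] lam K loss_bdd in auto)
  \<comment> \<open>supermartingale bound\<close>
  have C: "(\<integral>\<^sup>+S. (\<Prod>i\<in>{1..j}. g i S) \<partial>\<mu>) \<le> 1" if "j \<le> m" for j
    using that
  proof (induction j)
    case 0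
    then show ?case by (simp add: mu.emeasure_space_1)
  next
    case (Suc j)
    have jm: "j < m" "1 \<le> Suc j" "Suc j \<le> m" using Suc by auto
    define H where "H S = (\<Prod>i\<in>{1..j}. g i S)" for S
    have Hm[measurable]: "H \<in> borel_measurable (F j)"
      unfolding H_def
    proof (rule borel_measurable_prod_ennreal)
      fix i assume i: "i \<in> {1..j}"
      show "g i \<in> borel_measurable (F j)"
        by (rule meas_mono_F[OF _ _ gmeas]) (use i jm filt_mono[of i j] subF in auto)
    qed
    have eqp: "(\<Prod>i\<in>{1..Suc j}. g i S) = H S * g (Suc j) S" for S
      by (simp add: H_def atLeastAtMostSuc_conv mult.commute)
    note Gm = Gmeas[OF jm(2,3), simplified]
    have fm: "(\<lambda>x. H (fst x) * G (Suc j) (fst x) (snd x)) \<in> borel_measurable (F j \<Otimes>\<^sub>M MZ)"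
      using Gm by (simp add: case_prod_beta')
    have X: "(\<lambda>S. S (Suc j)) \<in> measurable \<mu> MZ"
      by (rule measurable_from_subalg[OF filt_sub adapted]) (use jm in auto)
    have rcd': "\<forall>A\<in>sets MZ. AE x in \<mu>. measure (\<kappa> (Suc j) x) A = real_cond_exp \<mu> (F j) (indicator {y\<in>space \<mu>. y (Suc j) \<in> A}) x"
      using rcd[OF jm(2,3)] by (simp add: is_rcd_def)
    have kj: "\<kappa> (Suc j) \<in> measurable (F j) (prob_algebra MZ)" using kF[OF jm(2,3)] by simp
    have "(\<integral>\<^sup>+S. (\<Prod>i\<in>{1..Suc j}. g i S) \<partial>\<mu>) = (\<integral>\<^sup>+S. H S * G (Suc j) S (S (Suc j)) \<partial>\<mu>)"
      unfolding eqp by (simp add: g_def)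
    also have "\<dots> = (\<integral>\<^sup>+S. \<integral>\<^sup>+z. H S * G (Suc j) S z \<partial>\<kappa> (Suc j) S \<partial>\<mu>)"
      using disint[OF mu_prob filt_sub[of j] X kj rcd' fm] jm by simp
    also have "\<dots> \<le> (\<integral>\<^sup>+S. H S \<partial>\<mu>)"
    proof (rule nn_integral_mono)
      fix S assume S: "S \<in> space \<mu>"
      have "G (Suc j) S \<in> borel_measurable (\<kappa> (Suc j) S)"
        by (rule meas_section[OF Gmeas[OF jm(2,3)]]) (use S subF[of j] jm kS[OF jm(2,3) S] in auto)
      then have "(\<integral>\<^sup>+z. H S * G (Suc j) S z \<partial>\<kappa> (Suc j) S) = H S * (\<integral>\<^sup>+z. G (Suc j) S z \<partial>\<kappa> (Suc j) S)"
        by (rule nn_integral_cmult)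
      also have "\<dots> \<le> H S * 1"
        by (rule mult_left_mono[OF Gle1[OF jm(2,3) S]]) simp
      finally show "(\<integral>\<^sup>+z. H S * G (Suc j) S z \<partial>\<kappa> (Suc j) S) \<le> H S" by simp
    qed
    also have "\<dots> \<le> 1" using Suc unfolding H_def by simp
    finally show ?case .
  qed
  define U where "U S = (\<Prod>i\<in>{1..m}. g i S)" for S
  have Um[measurable]: "U \<in> borel_measurable \<mu>"
    unfolding U_def by (rule borel_measurable_prod_ennreal) (use gmu in auto)
  define A where "A = {S \<in> space \<mu>. U S \<le> ennreal (1 / \<delta>)}"
  have Aset: "A \<in> sets \<mu>" unfolding A_def by measurable
  have "emeasure \<mu> (space \<mu> - A) \<le> emeasure \<mu> {x \<in> space \<mu>. 1 \<le> ennreal \<delta> * U x}"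
  proof (rule emeasure_mono)
    show "space \<mu> - A \<subseteq> {x \<in> space \<mu>. 1 \<le> ennreal \<delta> * U x}"
    proof
      fix x assume x: "x \<in> space \<mu> - A"
      then have "ennreal (1 / \<delta>) \<le> U x" by (auto simp: A_def)
      then have "ennreal \<delta> * ennreal (1 / \<delta>) \<le> ennreal \<delta> * U x" by (rule mult_left_mono) simp
      moreover have "ennreal \<delta> * ennreal (1 / \<delta>) = 1" using delta by (simp add: ennreal_mult[symmetric])
      ultimately show "x \<in> {x \<in> space \<mu>. 1 \<le> ennreal \<delta> * U x}" using x by simp
    qed
    show "{x \<in> space \<mu>. 1 \<le> ennreal \<delta> * U x} \<in> sets \<mu>" by measurable
  qed
  also have "\<dots> \<le> ennreal \<delta> * (\<integral>\<^sup>+x. U x * indicator (space \<mu>) x \<partial>\<mu>)"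
    using nn_integral_Markov_inequality[of U "space \<mu>" \<mu> "ennreal \<delta>"] by simp
  also have "\<dots> = ennreal \<delta> * (\<integral>\<^sup>+x. U x \<partial>\<mu>)"
    by (intro arg_cong[where f="\<lambda>t. ennreal \<delta> * t"] nn_integral_cong) simp
  also have "\<dots> \<le> ennreal \<delta> * 1"
    by (rule mult_left_mono) (use C[of m] in \<open>simp_all add: U_def\<close>)
  finally have "emeasure \<mu> (space \<mu> - A) \<le> ennreal \<delta>" by simp
  then have "measure \<mu> (space \<mu> - A) \<le> \<delta>"
    using delta by (simp add: mu.emeasure_eq_measure)
  then have Ameas: "measure \<mu> A \<ge> 1 - \<delta>"
    using mu.prob_compl[OF Aset] by simp
  have det: "ereal (\<Sum>i = 1..m. \<integral>h. (\<integral>z. loss h z \<partial>(\<kappa> i S)) \<partial>(Q i S))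
        \<le> (\<Sum>i = 1..m. ereal (\<integral>h. loss h (S i) \<partial>(Q i S)) + KL_div (Q i S) (P i S) / ereal lam)
           + ereal (lam * real m * K\<^sup>2 / 2) + ereal (ln (1 / \<delta>) / lam)" if SA: "S \<in> A" for S
  proof -
    have S: "S \<in> space \<mu>" and US: "U S \<le> ennreal (1 / \<delta>)" using SA by (auto simp: A_def)
    have Si: "S i \<in> space MZ" if "i \<in> {1..m}" for i
      using S that by (auto simp: spmu \<Omega>_def space_PiM PiE_def Pi_def)
    define Z where "Z i = (\<integral>h. exp (lam * (E i S h - loss h (S i))) \<partial>P i S)" for i
    have per_i: "ereal (\<integral>h. E i S h \<partial>Q i S) \<le> ereal (\<integral>h. loss h (S i) \<partial>(Q i S)) + KL_div (Q i S) (P i S) / ereal lam + ereal (ln (Z i) / lam)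
       \<and> g i S = ennreal (Z i * exp (- c)) \<and> Z i > 0" if i: "i \<in> {1..m}" for i
    proof -
      have i1: "1 \<le> i" "i \<le> m" using i by auto
      note kS[OF i1 S] PS[OF i1 S] QS[OF i1 S]
      have SF: "S \<in> space (F (i-1))" using S subF[of "i-1"] i1 by auto
      have Em: "E i S \<in> borel_measurable MH"
        by (rule meas_section[OF Emeas[OF i1] SF]) simp
      have lm: "(\<lambda>h. loss h (S i)) \<in> borel_measurable MH"
        using Si[OF i] by measurable
      have Eb: "0 \<le> E i S h \<and> E i S h \<le> K" if h: "h \<in> space MH" for h
      proof -
        have sp: "space (\<kappa> i S) = space MZ" using kS[OF i1 S] by (auto dest: sets_eq_imp_space_eq)
        have m: "(\<lambda>z. loss h z) \<in> borel_measurable (\<kappa> i S)"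
          using h kS[OF i1 S] by (simp cong: measurable_cong_sets)
        have "0 \<le> integral\<^sup>L (\<kappa> i S) (\<lambda>z. loss h z) \<and> integral\<^sup>L (\<kappa> i S) (\<lambda>z. loss h z) \<le> K \<and> integrable (\<kappa> i S) (\<lambda>z. loss h z)"
          by (rule int_bdd[OF _ m]) (use kS[OF i1 S] sp h loss_bdd in auto)
        then show ?thesis unfolding E_def by simp
      qed
      define f where "f h = lam * (E i S h - loss h (S i))" for h
      have fm: "f \<in> borel_measurable MH" unfolding f_def using Em lm by measurable
      have fb: "\<bar>f h\<bar> \<le> lam * K" if "h \<in> space MH" for h
      proof -
        have "\<bar>E i S h - loss h (S i)\<bar> \<le> K" using Eb[OF that] loss_bdd[OF that Si[OF i]] by linarith
        then show ?thesis unfolding f_def using lam by (simp add: abs_mult)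
      qed
      have spP: "space (P i S) = space MH" using PS[OF i1 S] by (auto dest: sets_eq_imp_space_eq)
      have spQ: "space (Q i S) = space MH" using QS[OF i1 S] by (auto dest: sets_eq_imp_space_eq)
      have fmP: "f \<in> borel_measurable (P i S)" using fm PS[OF i1 S] by (simp cong: measurable_cong_sets)
      have DVi: "ereal (\<integral>h. f h \<partial>Q i S) \<le> KL_div (Q i S) (P i S) + ereal (ln (\<integral>h. exp (f h) \<partial>P i S))"
        by (rule DV[OF _ _ _ fmP, of _ "lam * K"]) (use QS[OF i1 S] PS[OF i1 S] fb spP in auto)
      have EQ: "integrable (Q i S) (E i S)"
        using int_bdd[of "Q i S" "E i S" K] QS[OF i1 S] Em Eb spQ by (simp cong: measurable_cong_sets)
      have LQ: "integrable (Q i S) (\<lambda>h. loss h (S i))"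
        using int_bdd[of "Q i S" "\<lambda>h. loss h (S i)" K] QS[OF i1 S] lm loss_bdd Si[OF i] spQ
        by (simp cong: measurable_cong_sets)
      have eqf: "(\<integral>h. f h \<partial>Q i S) = lam * ((\<integral>h. E i S h \<partial>Q i S) - (\<integral>h. loss h (S i) \<partial>Q i S))"
        unfolding f_def using EQ LQ by simp
      have Zf: "Z i = (\<integral>h. exp (f h) \<partial>P i S)" by (simp add: Z_def f_def)
      from DVi have "ereal (lam * ((\<integral>h. E i S h \<partial>Q i S) - (\<integral>h. loss h (S i) \<partial>Q i S))) \<le> KL_div (Q i S) (P i S) + ereal (ln (Z i))"
        by (simp only: eqf Zf[symmetric])
      from ereal_step[OF lam KL_div_not_MInf this]
      have s1: "ereal (\<integral>h. E i S h \<partial>Q i S) \<le> ereal (\<integral>h. loss h (S i) \<partial>(Q i S)) + KL_div (Q i S) (P i S) / ereal lam + ereal (ln (Z i) / lam)" .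
      interpret PP: prob_space "P i S" using PS[OF i1 S] by simp
      have intP: "integrable (P i S) (\<lambda>h. exp (f h - c))"
        by (rule PP.integrable_const_bound[where B="exp (lam * K - c)"])
           (use fb spP fmP in \<open>auto intro!: AE_I2 simp: abs_le_iff\<close>)
      have "g i S = (\<integral>\<^sup>+h. ennreal (exp (f h - c)) \<partial>P i S)"
        by (simp add: g_def G_def f_def)
      also have "\<dots> = ennreal (\<integral>h. exp (f h - c) \<partial>P i S)"
        by (rule nn_integral_eq_integral[OF intP]) simp
      also have "(\<integral>h. exp (f h - c) \<partial>P i S) = (\<integral>h. exp (f h) * exp (- c) \<partial>P i S)"
        by (simp add: exp_add[symmetric])
      also have "\<dots> = Z i * exp (- c)"
        by (simp add: Zf)
      finally have s2: "g i S = ennreal (Z i * exp (- c))" .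
      have efm: "(\<lambda>h. exp (lam * (E i S h - loss h (S i)))) \<in> borel_measurable (P i S)"
        using fmP unfolding f_def by measurable
      have "(\<integral>h. exp (- (lam * K)) \<partial>P i S) \<le> Z i"
        unfolding Z_def
      proof (rule integral_mono)
        show "integrable (P i S) (\<lambda>x. exp (- (lam * K)))" by simp
        show "integrable (P i S) (\<lambda>h. exp (lam * (E i S h - loss h (S i))))"
          by (rule PP.integrable_const_bound[where B="exp (lam * K)"])
             (use fb spP efm in \<open>auto intro!: AE_I2 simp: abs_le_iff f_def\<close>)
        fix h assume "h \<in> space (P i S)"
        then have "- (lam * K) \<le> f h" using fb[of h] spP by (simp add: abs_le_iff)
        then show "exp (- (lam * K)) \<le> exp (lam * (E i S h - loss h (S i)))" by (simp add: f_def)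
      qed
      then have "exp (- (lam * K)) \<le> Z i" by (simp add: PP.prob_space)
      then have s3: "Z i > 0" using exp_gt_zero[of "- (lam * K)"] by linarith
      show ?thesis using s1 s2 s3 unfolding E_def by simp
    qed
    have Zpos: "\<And>i. i \<in> {1..m} \<Longrightarrow> Z i > 0" using per_i by blast
    have "U S = (\<Prod>i\<in>{1..m}. ennreal (Z i * exp (- c)))"
      unfolding U_def using per_i by (intro prod.cong) auto
    also have "\<dots> = ennreal (\<Prod>i\<in>{1..m}. Z i * exp (- c))"
      by (rule prod_ennreal) (use Zpos in \<open>auto intro: less_imp_le\<close>)
    finally have "ennreal (\<Prod>i\<in>{1..m}. Z i * exp (- c)) \<le> ennreal (1 / \<delta>)" using US by simp
    then have pr: "(\<Prod>i\<in>{1..m}. Z i * exp (- c)) \<le> 1 / \<delta>"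
      using delta by (subst (asm) ennreal_le_iff) auto
    have prpos: "(\<Prod>i\<in>{1..m}. Z i * exp (- c)) > 0"
      by (rule prod_pos) (use Zpos in auto)
    have "ln (\<Prod>i\<in>{1..m}. Z i * exp (- c)) \<le> ln (1 / \<delta>)"
      using pr prpos delta by (subst ln_le_cancel_iff) auto
    moreover have "ln (\<Prod>i\<in>{1..m}. Z i * exp (- c)) = (\<Sum>i\<in>{1..m}. ln (Z i) - c)"
    proof (subst ln_prod)
      show "finite {1..m}" by simp
      show "\<And>i. i \<in> {1..m} \<Longrightarrow> Z i * exp (- c) \<noteq> 0" using Zpos by (metis exp_gt_zero less_irrefl mult_pos_pos)
      show "(\<Sum>i\<in>{1..m}. ln (Z i * exp (- c))) = (\<Sum>i\<in>{1..m}. ln (Z i) - c)"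
      proof (rule sum.cong[OF refl])
        fix i assume "i \<in> {1..m}"
        then have "Z i > 0" using Zpos by blast
        then show "ln (Z i * exp (- c)) = ln (Z i) - c" by (simp add: ln_mult)
      qed
    qed
    ultimately have "(\<Sum>i\<in>{1..m}. ln (Z i)) - real m * c \<le> ln (1 / \<delta>)"
      by (simp add: sum_subtractf)
    then have "(\<Sum>i\<in>{1..m}. ln (Z i)) / lam \<le> (ln (1 / \<delta>) + real m * c) / lam"
      using lam by (simp add: divide_right_mono)
    also have "\<dots> = lam * real m * K\<^sup>2 / 2 + ln (1 / \<delta>) / lam"
      using lam by (simp add: c_def field_simps power2_eq_square)
    finally have zb: "(\<Sum>i\<in>{1..m}. ln (Z i) / lam) \<le> lam * real m * K\<^sup>2 / 2 + ln (1 / \<delta>) / lam"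
      by (simp add: sum_divide_distrib)
    have "ereal (\<Sum>i = 1..m. \<integral>h. (\<integral>z. loss h z \<partial>(\<kappa> i S)) \<partial>(Q i S))
        = (\<Sum>i = 1..m. ereal (\<integral>h. E i S h \<partial>(Q i S)))"
      by (simp add: E_def)
    also have "\<dots> \<le> (\<Sum>i = 1..m. (ereal (\<integral>h. loss h (S i) \<partial>(Q i S)) + KL_div (Q i S) (P i S) / ereal lam) + ereal (ln (Z i) / lam))"
      by (rule sum_mono) (use per_i in auto)
    also have "\<dots> = (\<Sum>i = 1..m. ereal (\<integral>h. loss h (S i) \<partial>(Q i S)) + KL_div (Q i S) (P i S) / ereal lam)
        + ereal (\<Sum>i = 1..m. ln (Z i) / lam)"
      by (simp add: sum.distrib)
    also have "\<dots> \<le> (\<Sum>i = 1..m. ereal (\<integral>h. loss h (S i) \<partial>(Q i S)) + KL_div (Q i S) (P i S) / ereal lam)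
        + ereal (lam * real m * K\<^sup>2 / 2 + ln (1 / \<delta>) / lam)"
      by (rule add_left_mono) (use zb in simp)
    finally show ?thesis by (simp add: add.assoc)
  qed
  show ?thesis using Aset Ameas det by blast
qed

end
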